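(* Consider the FlexPD-F iterates described in the context with $\alpha,\beta>0$ and integer $T\ge1$, and let $U=I-\alpha B$. If $U\succ 0$, i.e. $\alpha<1/\rho(B)$, then for every $p>1$ and every $k\ge0$, \[\|x^{k+1,T-1}-x^*\|_U^2+\frac{\alpha}{\beta}\|\lambda^k-\lambda^*\|^2\le \Gamma_F^{T-1}\Big(\|x^k-x^*\|_U^2+\frac{\alpha}{\beta}\|\lambda^k-\lambda^*\|^2\Big),\] where \[\Gamma_F=\max\Big\{1+\frac{p\alpha\beta\rho(AA')}{p-1},\; p\Big(\sqrt{\rho(U)}+\alpha L\sqrt{\rho(U^{-1})}\Big)^2\Big\}.\]
   Context: Setting: $n$ agents are connected by a connected undirected graph with edge set $\mathcal E$, $\epsilon=|\mathcal E|$. For $x\in\mathbb R^n$ let $f(x)=\sum_{i=1}^n f_i(x_i)$, where each $f_i:\mathbb R\to\mathbb R$ is twice differentiable with $m\le f_i''\le L$ for constants $0<m\le L$; $\nabla f(x)=(f_1'(x_1),\dots,f_n'(x_n))'$. $A\in\mathbb R^{\epsilon\times n}$ is the edge–node incidence matrix (null space spanned by the all-ones vector). $B\in\mathbb R^{n\times n}$ is symmetric positive semidefinite with the same null space as $A$, off-diagonal entries nonzero only on edges. $x^*$ is the unique minimizer of $f$ subject to $Ax=0$ and $\lambda^*$ a Lagrange multiplier with $\nabla f(x^* )+A'\lambda^*=0$, $Ax^*=0$, $Bx^*=0$, chosen in the column space of $A$. FlexPD-F: given $\alpha,\beta>0$, $T\ge1$, $x^0$ arbitrary, $\lambda^0=0$;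 for $k\ge0$: $x^{k+1,0}=x^k$, $x^{k+1,t}=(I-\alpha B)x^{k+1,t-1}-\alpha\nabla f(x^{k+1,t-1})-\alpha A'\lambda^k$ for $t=1,\dots,T$, $x^{k+1}=x^{k+1,T}$, $\lambda^{k+1}=\lambda^k+\beta Ax^{k+1}$. Notation: $\rho(S)$ is the largest eigenvalue of a symmetric matrix $S$ (if $B=0$, $1/\rho(B)=\infty$); $\|v\|_S^2=v'Sv$; $\|\cdot\|$ is the Euclidean norm. *)

theory Defs
  imports "HOL-Analysis.Analysis"
begin

definition lambda_max :: "real^'n^'n \<Rightarrow> real" where
  "lambda_max S = Max {l. \<exists>v. v \<noteq> 0 \<and> S *v v = l *s v}"

definition qnorm :: "real^'n^'n \<Rightarrow> real^'n \<Rightarrow> real" where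
  "qnorm S v = v \<bullet> (S *v v)"

text \<open>Edge-node incidence matrix of the graph whose edge e joins src e and dst e
  (arbitrary orientation).\<close>
definition incidence :: "('e \<Rightarrow> 'n) \<Rightarrow> ('e \<Rightarrow> 'n) \<Rightarrow> real^'n^'e" where
  "incidence src dst = (\<chi> e i. if i = src e then 1 else if i = dst e then -1 else 0)"

definition adjacent :: "('e::finite \<Rightarrow> 'n) \<Rightarrow> ('e \<Rightarrow> 'n) \<Rightarrow> 'n \<Rightarrow> 'n \<Rightarrow> bool" where
  "adjacent src dst i j = (\<exists>e. (src e = i \<and> dst e = j) \<or> (src e = j \<and> dst e = i))"

definition fsum :: "('n::finite \<Rightarrow> real \<Rightarrow> real) \<Rightarrow> real^'n \<Rightarrow> real" where
  "fsum f x = (\<Sum>i\<in>UNIV. f i (x $ i))"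

definition grad :: "('n \<Rightarrow> real \<Rightarrow> real) \<Rightarrow> real^'n \<Rightarrow> real^'n" where
  "grad f' x = (\<chi> i. f' i (x $ i))"

text \<open>Inner loop of FlexPD-F: x^{k+1,t} starting from x^{k+1,0} = x with multiplier lam.\<close>
fun flexpd_inner :: "real \<Rightarrow> real^'n^'n \<Rightarrow> ('n \<Rightarrow> real \<Rightarrow> real) \<Rightarrow> real^'n^'e
    \<Rightarrow> real^'e \<Rightarrow> real^'n \<Rightarrow> nat \<Rightarrow> real^'n" where
  "flexpd_inner \<alpha> B f' A lam x 0 = x"
| "flexpd_inner \<alpha> B f' A lam x (Suc t) =
     (let y = flexpd_inner \<alpha> B f' A lam x t in
      (mat 1 - \<alpha> *\<^sub>R B) *v y - \<alpha> *\<^sub>R grad f' y - \<alpha> *\<^sub>R (transpose A *v lam))"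

end

theory Submission
  imports Defs
begin


lemma sym_dot:
  fixes M :: "real^'n^'n"
  assumes "transpose M = M"
  shows "(M *v a) \<bullet> b = a \<bullet> (M *v b)"
proof -
  have "a \<bullet> (M *v b) = (a v* M) \<bullet> b" by (simp add: dot_lmul_matrix)
  also have "a v* M = transpose M *v a" by simp
  finally show ?thesis using assms by simp
qed

lemma psd_cs:
  fixes F :: "'a::real_inner \<Rightarrow> 'a"
  assumes lin: "linear F" and sym: "\<And>u w. F u \<bullet> w = u \<bullet> F w"
    and psd: "\<And>u. 0 \<le> u \<bullet> F u"
  shows "(a \<bullet> F b)^2 \<le> (a \<bullet> F a) * (b \<bullet> F b)"
proof -
  define P where "P = a \<bullet> F a"
  define R where "R = b \<bullet> F b"
  define X where "X = a \<bullet> F b"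
  have ba: "b \<bullet> F a = X" unfolding X_def using sym[of a b] by (simp add: inner_commute)
  have exp: "0 \<le> P + 2 * t * X + t^2 * R" for t
  proof -
    have "0 \<le> (a + t *\<^sub>R b) \<bullet> F (a + t *\<^sub>R b)" by (rule psd)
    also have "\<dots> = P + 2 * t * X + t^2 * R"
      using ba unfolding P_def R_def X_def
      by (simp add: linear_add[OF lin] linear_scale[OF lin] inner_add_left inner_add_right power2_eq_square algebra_simps)
    finally show ?thesis .
  qed
  have R0: "0 \<le> R" unfolding R_def by (rule psd)
  show ?thesis
  proof (cases "R = 0")
    case True
    have "X = 0"
    proof (rule ccontr)
      assume "X \<noteq> 0"
      have "0 \<le> P + 2 * (-(P+1)/(2*X)) * X" using exp[of "-(P+1)/(2*X)"] True by simp
      also have "\<dots> = -1" using \<open>X \<noteq> 0\<close> by (simp add: field_simps)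
      finally show False by simp
    qed
    thus ?thesis using True unfolding P_def R_def X_def by simp
  next
    case False
    hence Rp: "R > 0" using R0 by simp
    have "0 \<le> P + 2 * (-X/R) * X + (-X/R)^2 * R" by (rule exp)
    also have "\<dots> = P - X^2/R" using Rp by (simp add: field_simps power2_eq_square)
    finally have "X^2/R \<le> P" by simp
    hence "X^2 \<le> P * R" using Rp by (simp add: field_simps)
    thus ?thesis unfolding P_def R_def X_def by simp
  qed
qed


lemma quad_scale:
  fixes S :: "real^'n^'n"
  shows "(c *\<^sub>R v) \<bullet> (S *v (c *\<^sub>R v)) = c^2 * (v \<bullet> (S *v v))"
  by (simp add: matrix_vector_mult_scaleR power2_eq_square)

lemma eig_exists_max:
  fixes S :: "real^'n^'n"
  assumes sym: "transpose S = S"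
  shows "\<exists>\<mu> v0. v0 \<noteq> 0 \<and> S *v v0 = \<mu> *s v0 \<and> (\<forall>v. v \<bullet> (S *v v) \<le> \<mu> * (v \<bullet> v))"
proof -
  have "compact (sphere (0::real^'n) 1)" by simp
  moreover have "sphere (0::real^'n) 1 \<noteq> {}" by simp
  moreover have "continuous_on (sphere (0::real^'n) 1) (\<lambda>v. v \<bullet> (S *v v))"
    by (intro continuous_intros linear_continuous_on) (auto intro: bounded_linear_intros)
  ultimately obtain v0 where v0: "v0 \<in> sphere 0 1"
    and mx: "\<And>y. y \<in> sphere 0 1 \<Longrightarrow> y \<bullet> (S *v y) \<le> v0 \<bullet> (S *v v0)"
    using continuous_attains_sup[of "sphere (0::real^'n) 1" "\<lambda>v. v \<bullet> (S *v v)"] by blast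
  define \<mu> where "\<mu> = v0 \<bullet> (S *v v0)"
  have nv0: "norm v0 = 1" using v0 by simp
  hence v0v0: "v0 \<bullet> v0 = 1" by (simp add: norm_eq_1)
  have all: "v \<bullet> (S *v v) \<le> \<mu> * (v \<bullet> v)" for v
  proof (cases "v = 0")
    case True thus ?thesis by simp
  next
    case False
    define w where "w = (1 / norm v) *\<^sub>R v"
    have "w \<in> sphere 0 1" using False unfolding w_def by simp
    hence "w \<bullet> (S *v w) \<le> \<mu>" using mx \<mu>_def by simp
    moreover have "w \<bullet> (S *v w) = (1/norm v)^2 * (v \<bullet> (S *v v))" unfolding w_def by (rule quad_scale)
    moreover have "v \<bullet> v = (norm v)^2" by (simp add: power2_norm_eq_inner)
    moreover have "norm v > 0" using False by simp
    ultimately show ?thesis by (simp add: field_simps power2_eq_square)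
  qed
  define F where "F = (\<lambda>v::real^'n. \<mu> *\<^sub>R v - S *v v)"
  have linF: "linear F" unfolding F_def
    by (auto simp: linear_iff algebra_simps matrix_vector_mult_scaleR)
  have symF: "F u \<bullet> w = u \<bullet> F w" for u w
    unfolding F_def using sym_dot[OF sym, of u w] by (simp add: inner_diff_left inner_diff_right)
  have psdF: "0 \<le> u \<bullet> F u" for u
    unfolding F_def using all[of u] by (simp add: inner_diff_right)
  have F0: "v0 \<bullet> F v0 = 0" unfolding F_def \<mu>_def using v0v0 by (simp add: inner_diff_right)
  have "(F v0 \<bullet> F v0)^2 \<le> (F v0 \<bullet> F (F v0)) * (v0 \<bullet> F v0)"
    using psd_cs[OF linF symF psdF, of "F v0" v0] by simp
  hence "(F v0 \<bullet> F v0)^2 \<le> 0" using F0 by simp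
  hence "F v0 = 0" by simp
  hence "S *v v0 = \<mu> *s v0" unfolding F_def by (simp add: scalar_mult_eq_scaleR)
  moreover have "v0 \<noteq> 0" using nv0 by auto
  ultimately show ?thesis using all by blast
qed

lemma eig_finite:
  fixes S :: "real^'n^'n"
  assumes sym: "transpose S = S"
  shows "finite {l. \<exists>v. v \<noteq> 0 \<and> S *v v = l *s v}"
proof -
  define E where "E = {l. \<exists>v. v \<noteq> 0 \<and> S *v v = l *s v}"
  define ev where "ev l = (SOME v. v \<noteq> 0 \<and> S *v v = l *s v)" for l
  have ev: "ev l \<noteq> 0 \<and> S *v ev l = l *s ev l" if "l \<in> E" for l
    using that unfolding E_def ev_def by (metis (mono_tags, lifting) mem_Collect_eq someI_ex)
  have orth: "ev l \<bullet> ev m = 0" if "l \<in> E" "m \<in> E" "l \<noteq> m" for l m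
  proof -
    have "(S *v ev l) \<bullet> ev m = ev l \<bullet> (S *v ev m)" by (rule sym_dot[OF sym])
    hence "l * (ev l \<bullet> ev m) = m * (ev l \<bullet> ev m)" using ev[OF that(1)] ev[OF that(2)]
      by (simp add: scalar_mult_eq_scaleR)
    thus ?thesis using that(3) by simp
  qed
  have inj: "inj_on ev E"
  proof (rule inj_onI)
    fix l m assume "l \<in> E" "m \<in> E" "ev l = ev m"
    hence "l *s ev l = m *s ev l" using ev by metis
    thus "l = m" using ev[OF \<open>l \<in> E\<close>] by (simp add: scalar_mult_eq_scaleR)
  qed
  have "pairwise orthogonal (ev ` E)"
    unfolding pairwise_def orthogonal_def using orth by auto
  moreover have "0 \<notin> ev ` E" using ev by auto
  ultimately have "independent (ev ` E)" by (rule pairwise_orthogonal_independent)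
  hence "finite (ev ` E)" using independent_bound by blast
  thus ?thesis using finite_imageD[OF _ inj] unfolding E_def by blast
qed

lemma lambda_max_props:
  fixes S :: "real^'n^'n"
  assumes sym: "transpose S = S"
  shows "\<exists>v. v \<noteq> 0 \<and> S *v v = lambda_max S *s v"
    and "v \<bullet> (S *v v) \<le> lambda_max S * (v \<bullet> v)"
proof -
  obtain \<mu> v0 where v0: "v0 \<noteq> 0" "S *v v0 = \<mu> *s v0" and all: "\<And>v. v \<bullet> (S *v v) \<le> \<mu> * (v \<bullet> v)"
    using eig_exists_max[OF sym] by blast
  have "lambda_max S = \<mu>" unfolding lambda_max_def
  proof (rule Max_eqI[OF eig_finite[OF sym]])
    show "\<mu> \<in> {l. \<exists>v. v \<noteq> 0 \<and> S *v v = l *s v}" using v0 by blast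
    fix l assume "l \<in> {l. \<exists>v. v \<noteq> 0 \<and> S *v v = l *s v}"
    then obtain v where v: "v \<noteq> 0" "S *v v = l *s v" by blast
    have "l * (v \<bullet> v) \<le> \<mu> * (v \<bullet> v)" using all[of v] v(2) by (simp add: scalar_mult_eq_scaleR)
    moreover have "v \<bullet> v > 0" using v(1) by simp
    ultimately show "l \<le> \<mu>" by simp
  qed
  thus "\<exists>v. v \<noteq> 0 \<and> S *v v = lambda_max S *s v" "v \<bullet> (S *v v) \<le> lambda_max S * (v \<bullet> v)"
    using v0 all by auto
qed


lemma lmax_nonneg:
  fixes S :: "real^'n^'n"
  assumes sym: "transpose S = S" and psd: "\<And>v. 0 \<le> v \<bullet> (S *v v)"
  shows "0 \<le> lambda_max S"
proof -
  obtain v where v: "v \<noteq> 0" "S *v v = lambda_max S *s v" using lambda_max_props(1)[OF sym] by blast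
  have "0 \<le> lambda_max S * (v \<bullet> v)" using psd[of v] v(2) by (simp add: scalar_mult_eq_scaleR)
  moreover have "v \<bullet> v > 0" using v(1) by simp
  ultimately show ?thesis by (simp add: zero_le_mult_iff)
qed

lemma lmax_G:
  fixes M :: "real^'n^'n"
  assumes sym: "transpose M = M" and psd: "\<And>v. 0 \<le> v \<bullet> (M *v v)"
  shows "(M *v v) \<bullet> (M *v v) \<le> lambda_max M * (v \<bullet> (M *v v))"
proof -
  define X where "X = (M *v v) \<bullet> (M *v v)"
  define \<rho> where "\<rho> = lambda_max M"
  have r0: "0 \<le> \<rho>" unfolding \<rho>_def by (rule lmax_nonneg[OF sym psd])
  have X0: "0 \<le> X" unfolding X_def by simp
  have e1: "v \<bullet> (M *v (M *v v)) = X" unfolding X_def by (simp add: sym_dot[OF sym])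
  have symF: "(M *v u) \<bullet> w = u \<bullet> (M *v w)" for u w by (rule sym_dot[OF sym])
  have cs: "(v \<bullet> (M *v (M *v v)))^2 \<le> (v \<bullet> (M *v v)) * ((M *v v) \<bullet> (M *v (M *v v)))"
    using psd_cs[of "\<lambda>u. M *v u", OF matrix_vector_mul_linear symF psd] by blast
  have "(M *v v) \<bullet> (M *v (M *v v)) \<le> \<rho> * X"
    unfolding \<rho>_def X_def by (rule lambda_max_props(2)[OF sym])
  hence "X^2 \<le> (v \<bullet> (M *v v)) * (\<rho> * X)" using cs e1 psd[of v]
    by (metis mult_left_mono order_trans)
  hence "X * X \<le> (\<rho> * (v \<bullet> (M *v v))) * X" by (simp add: power2_eq_square algebra_simps)
  hence "X \<le> \<rho> * (v \<bullet> (M *v v)) \<or> X = 0" using X0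
    by (metis less_eq_real_def mult_right_le_imp_le)
  moreover have "0 \<le> \<rho> * (v \<bullet> (M *v v))" using r0 psd[of v] by simp
  ultimately show ?thesis unfolding X_def \<rho>_def by auto
qed

lemma q_young:
  fixes F :: "'a::real_inner \<Rightarrow> 'a"
  assumes lin: "linear F" and sym: "\<And>u w. F u \<bullet> w = u \<bullet> F w"
    and psd: "\<And>u. 0 \<le> u \<bullet> F u" and p: "1 < p"
  shows "(a + b) \<bullet> F (a + b) \<le> p * (a \<bullet> F a) + p / (p - 1) * (b \<bullet> F b)"
proof -
  define P where "P = a \<bullet> F a"
  define R where "R = b \<bullet> F b"
  define X where "X = a \<bullet> F b"
  define s where "s = p - 1"
  have s0: "s > 0" using p s_def by simp
  have ba: "b \<bullet> F a = X" unfolding X_def using sym[of a b] by (simp add: inner_commute)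
  have "0 \<le> (s *\<^sub>R a - b) \<bullet> F (s *\<^sub>R a - b)" by (rule psd)
  also have "\<dots> = s^2 * P - 2 * s * X + R"
    using ba unfolding P_def R_def X_def
    by (simp add: linear_diff[OF lin] linear_scale[OF lin] inner_diff_left inner_diff_right power2_eq_square algebra_simps)
  finally have k: "2 * s * X \<le> s^2 * P + R" by simp
  have "(a + b) \<bullet> F (a + b) = P + 2 * X + R"
    using ba unfolding P_def R_def X_def
    by (simp add: linear_add[OF lin] inner_add_left inner_add_right algebra_simps)
  also have "\<dots> \<le> p * P + p / (p - 1) * R"
  proof -
    have "2 * X \<le> s * P + R / s" using k s0 by (simp add: field_simps power2_eq_square)
    moreover have "p = s + 1" "p / (p - 1) = 1 + 1 / s" using s0 unfolding s_def by (auto simp: field_simps)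
    ultimately show ?thesis by (simp add: algebra_simps)
  qed
  finally show ?thesis unfolding P_def R_def by simp
qed

lemma q_tri:
  fixes F :: "'a::real_inner \<Rightarrow> 'a"
  assumes lin: "linear F" and sym: "\<And>u w. F u \<bullet> w = u \<bullet> F w"
    and psd: "\<And>u. 0 \<le> u \<bullet> F u"
  shows "(a + b) \<bullet> F (a + b) \<le> (sqrt (a \<bullet> F a) + sqrt (b \<bullet> F b))^2"
proof -
  define P where "P = a \<bullet> F a"
  define R where "R = b \<bullet> F b"
  define X where "X = a \<bullet> F b"
  have P0: "0 \<le> P" "0 \<le> R" unfolding P_def R_def by (rule psd)+
  have ba: "b \<bullet> F a = X" unfolding X_def using sym[of a b] by (simp add: inner_commute)
  have cs: "X^2 \<le> P * R" unfolding X_def P_def R_def by (rule psd_cs[OF lin sym psd])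
  have "X \<le> sqrt P * sqrt R"
  proof -
    have "X \<le> \<bar>X\<bar>" by simp
    also have "\<bar>X\<bar> = sqrt (X^2)" by simp
    also have "\<dots> \<le> sqrt (P * R)" using cs by (rule real_sqrt_le_mono)
    finally show ?thesis by (simp add: real_sqrt_mult)
  qed
  have "(a + b) \<bullet> F (a + b) = P + 2 * X + R"
    using ba unfolding P_def R_def X_def
    by (simp add: linear_add[OF lin] inner_add_left inner_add_right algebra_simps)
  also have "\<dots> \<le> (sqrt P + sqrt R)^2"
    using \<open>X \<le> sqrt P * sqrt R\<close> P0 by (simp add: power2_eq_square algebra_simps)
  finally show ?thesis unfolding P_def R_def .
qed

lemma lip_deriv:
  fixes g g2 :: "real \<Rightarrow> real"
  assumes d: "\<And>t. (g has_real_derivative g2 t) (at t)" and b: "\<And>t. \<bar>g2 t\<bar> \<le> L"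
  shows "\<bar>g a - g c\<bar> \<le> L * \<bar>a - c\<bar>"
proof -
  have *: "\<bar>g y - g x\<bar> \<le> L * \<bar>y - x\<bar>" if xy: "x < y" for x y
  proof -
    obtain z where "g y - g x = (y - x) * g2 z" using MVT2[of x y g g2, OF xy] d by blast
    hence "\<bar>g y - g x\<bar> = \<bar>y - x\<bar> * \<bar>g2 z\<bar>" by (simp add: abs_mult)
    also have "\<dots> \<le> \<bar>y - x\<bar> * L" using b[of z] by (simp add: mult_left_mono)
    finally show ?thesis by (simp add: mult.commute)
  qed
  show ?thesis
  proof (cases a c rule: linorder_cases)
    case less thus ?thesis using *[OF less] by (simp add: abs_minus_commute)
  next
    case equal thus ?thesis using b[of 0] by simp
  next
    case greater thus ?thesis using *[OF greater] by simp
  qed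
qed


theorem lemma3p3:
  fixes src dst :: "'e::finite \<Rightarrow> 'n::finite"
    and f f' f'' :: "'n \<Rightarrow> real \<Rightarrow> real"
    and m L \<alpha> \<beta> p :: real and T :: nat
    and A :: "real^'n^'e" and B :: "real^'n^'n"
    and xs :: "real^'n" and ls :: "real^'e"
    and x :: "nat \<Rightarrow> real^'n" and lam :: "nat \<Rightarrow> real^'e"
    and k :: nat
  assumes loopfree: "\<And>e. src e \<noteq> dst e"
    and simple: "inj (\<lambda>e. {src e, dst e})"
    and connected: "\<And>i j. (adjacent src dst)\<^sup>*\<^sup>* i j"
    and A_def: "A = incidence src dst"
    and f1: "\<And>i t. (f i has_real_derivative f' i t) (at t)"
    and f2: "\<And>i t. (f' i has_real_derivative f'' i t) (at t)"
    and m_pos: "0 < m" and mL: "m \<le> L"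
    and f''_bounds: "\<And>i t. m \<le> f'' i t \<and> f'' i t \<le> L"
    and B_sym: "transpose B = B"
    and B_psd: "\<And>v. 0 \<le> v \<bullet> (B *v v)"
    and B_null: "{v. B *v v = 0} = {v. A *v v = 0}"
    and B_sparse: "\<And>i j. i \<noteq> j \<Longrightarrow> B $ i $ j \<noteq> 0 \<Longrightarrow> adjacent src dst i j"
    and xs_feas: "A *v xs = 0"
    and xs_unique_min: "\<And>y. A *v y = 0 \<Longrightarrow> y \<noteq> xs \<Longrightarrow> fsum f xs < fsum f y"
    and ls_KKT: "grad f' xs + transpose A *v ls = 0"
    and xs_B: "B *v xs = 0"
    and ls_range: "\<exists>z. ls = A *v z"
    and \<alpha>_pos: "0 < \<alpha>" and \<beta>_pos: "0 < \<beta>" and T_pos: "1 \<le> T"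
    and lam0: "lam 0 = 0"
    and x_step: "\<And>j. x (Suc j) = flexpd_inner \<alpha> B f' A (lam j) (x j) T"
    and lam_step: "\<And>j. lam (Suc j) = lam j + \<beta> *\<^sub>R (A *v x (Suc j))"
    and U_pd: "\<And>v. v \<noteq> 0 \<Longrightarrow> 0 < qnorm (mat 1 - \<alpha> *\<^sub>R B) v"
    and p_gt: "1 < p"
  shows "(let U = mat 1 - \<alpha> *\<^sub>R B;
             \<Gamma> = max (1 + p * \<alpha> * \<beta> * lambda_max (A ** transpose A) / (p - 1))
                     (p * (sqrt (lambda_max U) + \<alpha> * L * sqrt (lambda_max (matrix_inv U)))\<^sup>2)
         in qnorm U (flexpd_inner \<alpha> B f' A (lam k) (x k) (T - 1) - xs)
              + \<alpha> / \<beta> * (norm (lam k - ls))\<^sup>2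
            \<le> \<Gamma> ^ (T - 1) * (qnorm U (x k - xs) + \<alpha> / \<beta> * (norm (lam k - ls))\<^sup>2))"
proof -
  define U where "U = mat 1 - \<alpha> *\<^sub>R B"
  define V where "V = matrix_inv U"
  define \<rho>U where "\<rho>U = lambda_max U"
  define \<rho>V where "\<rho>V = lambda_max V"
  define \<rho>A where "\<rho>A = lambda_max (A ** transpose A)"
  define K where "K = sqrt \<rho>U + \<alpha> * L * sqrt \<rho>V"
  define \<Gamma> where "\<Gamma> = max (1 + p * \<alpha> * \<beta> * \<rho>A / (p - 1)) (p * K\<^sup>2)"
  define \<mu> where "\<mu> = lam k - ls"
  define c where "c = \<alpha> / \<beta> * (norm \<mu>)\<^sup>2"
  define y where "y t = flexpd_inner \<alpha> B f' A (lam k) (x k) t" for t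
  define q where "q v = v \<bullet> (U *v v)" for v
  have Uv: "U *v v = v - \<alpha> *\<^sub>R (B *v v)" for v
    by (simp add: U_def matrix_vector_mult_diff_rdistrib scaleR_matrix_vector_assoc[symmetric])
  have Bij: "B $ i $ j = B $ j $ i" for i j
    using B_sym by (metis transpose_def vec_lambda_beta)
  have Usym: "transpose U = U"
    unfolding U_def by (simp add: transpose_def vec_eq_iff mat_def Bij)
  have Upsd: "0 \<le> v \<bullet> (U *v v)" for v
    using U_pd[of v] by (cases "v = 0") (auto simp: qnorm_def U_def less_imp_le)
  have Uinj0: "v = 0" if "U *v v = 0" for v
    using U_pd[of v] that by (auto simp: qnorm_def U_def)
  have "inj ((*v) U)"
  proof (rule injI)
    fix v w assume "U *v v = U *v w"
    hence "U *v (v - w) = 0" by (simp add: matrix_vector_mult_diff_distrib)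
    thus "v = w" using Uinj0[of "v - w"] by simp
  qed
  hence "invertible U" using invertible_left_inverse matrix_left_invertible_injective by blast
  hence UV: "U ** V = mat 1 \<and> V ** U = mat 1"
    unfolding V_def matrix_inv_def by (rule someI_ex[OF iffD1[OF invertible_def]])
  have Vsym: "transpose V = V"
  proof -
    have "transpose V ** U = mat 1"
      using UV Usym by (metis matrix_transpose_mul transpose_mat)
    hence "transpose V = transpose V ** (U ** V)" using UV by (simp add: matrix_mul_rid)
    also have "\<dots> = (transpose V ** U) ** V" by (simp add: matrix_mul_assoc)
    also have "\<dots> = V" using \<open>transpose V ** U = mat 1\<close> by (simp add: matrix_mul_lid)
    finally show ?thesis .
  qed
  have UVv: "U *v (V *v w) = w" for w using UV by (simp add: matrix_vector_mul_assoc)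
  have VUv: "V *v (U *v w) = w" for w using UV by (simp add: matrix_vector_mul_assoc)
  have Vpsd: "0 \<le> w \<bullet> (V *v w)" for w
  proof -
    have "w \<bullet> (V *v w) = (U *v (V *v w)) \<bullet> (V *v w)" using UVv by simp
    also have "\<dots> = (V *v w) \<bullet> (U *v (V *v w))" by (simp add: inner_commute)
    finally show ?thesis using Upsd by simp
  qed
  have rU0: "0 \<le> \<rho>U" unfolding \<rho>U_def by (rule lmax_nonneg[OF Usym Upsd])
  have rU1: "\<rho>U \<le> 1"
  proof -
    obtain v where v: "v \<noteq> 0" "U *v v = \<rho>U *s v" using lambda_max_props(1)[OF Usym] \<rho>U_def by blast
    have "v \<bullet> (U *v v) = v \<bullet> v - \<alpha> * (v \<bullet> (B *v v))" by (simp add: Uv inner_diff_right)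
    hence "\<rho>U * (v \<bullet> v) = v \<bullet> v - \<alpha> * (v \<bullet> (B *v v))" using v(2) by (simp add: scalar_mult_eq_scaleR)
    moreover have "0 \<le> \<alpha> * (v \<bullet> (B *v v))" using \<alpha>_pos B_psd[of v] by simp
    ultimately have "\<rho>U * (v \<bullet> v) \<le> 1 * (v \<bullet> v)" by simp
    moreover have "v \<bullet> v > 0" using v(1) by simp
    ultimately show ?thesis by (meson mult_le_cancel_right_pos)
  qed
  have rV0: "0 \<le> \<rho>V" unfolding \<rho>V_def by (rule lmax_nonneg[OF Vsym Vpsd])
  have ineq1: "e \<bullet> e \<le> \<rho>V * q e" for e
  proof -
    have "(V *v (U *v e)) \<bullet> (V *v (U *v e)) \<le> \<rho>V * ((U *v e) \<bullet> (V *v (U *v e)))"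
      unfolding \<rho>V_def by (rule lmax_G[OF Vsym Vpsd])
    thus ?thesis unfolding q_def by (simp add: VUv inner_commute)
  qed
  have ineq2: "q (U *v e) \<le> \<rho>U * q e" for e
  proof -
    have "q (U *v e) \<le> \<rho>U * ((U *v e) \<bullet> (U *v e))"
      unfolding q_def \<rho>U_def by (rule lambda_max_props(2)[OF Usym])
    also have "\<dots> \<le> \<rho>U * (\<rho>U * q e)"
      using lmax_G[OF Usym Upsd, of e] rU0 unfolding q_def \<rho>U_def by (simp add: mult_left_mono)
    also have "\<dots> \<le> \<rho>U * q e"
      using rU0 rU1 Upsd[of e] unfolding q_def by (simp add: mult_left_le_one_le mult_left_mono)
    finally show ?thesis .
  qed
  have ineq3: "q d \<le> d \<bullet> d" for d
  proof -
    have "q d \<le> \<rho>U * (d \<bullet> d)" unfolding q_def \<rho>U_def by (rule lambda_max_props(2)[OF Usym])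
    also have "\<dots> \<le> d \<bullet> d" using rU1 rU0 by (simp add: mult_left_le_one_le)
    finally show ?thesis .
  qed
  have AAsym: "transpose (A ** transpose A) = A ** transpose A"
    by (simp add: matrix_transpose_mul)
  have ineq5: "q (transpose A *v w) \<le> \<rho>A * (w \<bullet> w)" for w
  proof -
    have "q (transpose A *v w) \<le> (transpose A *v w) \<bullet> (transpose A *v w)" by (rule ineq3)
    also have "\<dots> = w \<bullet> ((A ** transpose A) *v w)"
      by (simp add: dot_lmul_matrix matrix_vector_mul_assoc[symmetric])
    also have "\<dots> \<le> \<rho>A * (w \<bullet> w)" unfolding \<rho>A_def by (rule lambda_max_props(2)[OF AAsym])
    finally show ?thesis .
  qed
  have lip: "\<bar>f' i a - f' i b\<bar> \<le> L * \<bar>a - b\<bar>" for i a b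
  proof (rule lip_deriv[OF f2])
    fix t show "\<bar>f'' i t\<bar> \<le> L" using f''_bounds[of i t] m_pos by simp
  qed
  have dd: "(grad f' a - grad f' b) \<bullet> (grad f' a - grad f' b) \<le> L\<^sup>2 * ((a - b) \<bullet> (a - b))" for a b
  proof -
    have "(grad f' a - grad f' b) \<bullet> (grad f' a - grad f' b) = (\<Sum>i\<in>UNIV. (f' i (a$i) - f' i (b$i))\<^sup>2)"
      by (simp add: inner_vec_def grad_def power2_eq_square)
    also have "\<dots> \<le> (\<Sum>i\<in>UNIV. L\<^sup>2 * (a$i - b$i)\<^sup>2)"
    proof (rule sum_mono)
      fix i
      have "\<bar>f' i (a$i) - f' i (b$i)\<bar> \<le> L * \<bar>a$i - b$i\<bar>" by (rule lip)
      hence "\<bar>f' i (a$i) - f' i (b$i)\<bar>\<^sup>2 \<le> (L * \<bar>a$i - b$i\<bar>)\<^sup>2" by (rule power_mono) simp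
      thus "(f' i (a$i) - f' i (b$i))\<^sup>2 \<le> L\<^sup>2 * (a$i - b$i)\<^sup>2" by (simp add: power_mult_distrib)
    qed
    also have "\<dots> = L\<^sup>2 * ((a - b) \<bullet> (a - b))"
      by (simp add: inner_vec_def sum_distrib_left power2_eq_square)
    finally show ?thesis .
  qed
  have Uxs: "U *v xs = xs" using xs_B by (simp add: Uv)
  have gxs: "grad f' xs = - (transpose A *v ls)" using ls_KKT by (simp add: eq_neg_iff_add_eq_0)
  have ystep: "y (Suc t) = U *v y t - \<alpha> *\<^sub>R grad f' (y t) - \<alpha> *\<^sub>R (transpose A *v lam k)" for t
    by (simp add: y_def U_def Let_def)
  have err: "y (Suc t) - xs = (U *v (y t - xs) + (-\<alpha>) *\<^sub>R (grad f' (y t) - grad f' xs))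
               + (-\<alpha>) *\<^sub>R (transpose A *v \<mu>)" for t
    unfolding ystep \<mu>_def using Uxs gxs
    by (simp add: matrix_vector_mult_diff_distrib algebra_simps)
  have linU: "linear ((*v) U)" by simp
  have symU: "(U *v u) \<bullet> w = u \<bullet> (U *v w)" for u w by (rule sym_dot[OF Usym])
  have p1: "1 < p" by (rule p_gt)
  have G0: "0 \<le> \<Gamma>"
  proof -
    have "0 \<le> p * K\<^sup>2" using p_gt by simp
    thus ?thesis unfolding \<Gamma>_def by linarith
  qed
  have c0: "0 \<le> c" unfolding c_def using \<alpha>_pos \<beta>_pos by simp
  have onestep: "q (y (Suc t) - xs) + c \<le> \<Gamma> * (q (y t - xs) + c)" for t
  proof -
    define e where "e = y t - xs"
    define d where "d = grad f' (y t) - grad f' xs"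
    define a where "a = U *v e + (-\<alpha>) *\<^sub>R d"
    define b where "b = (-\<alpha>) *\<^sub>R (transpose A *v \<mu>)"
    have qe0: "0 \<le> q e" unfolding q_def by (rule Upsd)
    have E: "y (Suc t) - xs = a + b" unfolding a_def b_def e_def d_def by (rule err)
    have Y: "q (a + b) \<le> p * q a + p / (p - 1) * q b"
      unfolding q_def by (rule q_young[OF linU symU Upsd p1])
    have T: "q a \<le> (sqrt (q (U *v e)) + sqrt (q ((-\<alpha>) *\<^sub>R d)))\<^sup>2"
      unfolding q_def a_def by (rule q_tri[OF linU symU Upsd])
    have s1: "sqrt (q (U *v e)) \<le> sqrt \<rho>U * sqrt (q e)"
      using ineq2[of e] by (metis real_sqrt_le_mono real_sqrt_mult)
    have "q ((-\<alpha>) *\<^sub>R d) = \<alpha>\<^sup>2 * q d" unfolding q_def by (subst quad_scale) simp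
    also have "\<dots> \<le> \<alpha>\<^sup>2 * (L\<^sup>2 * (\<rho>V * q e))"
    proof -
      have "q d \<le> d \<bullet> d" by (rule ineq3)
      also have "\<dots> \<le> L\<^sup>2 * (e \<bullet> e)" unfolding d_def e_def by (rule dd)
      also have "\<dots> \<le> L\<^sup>2 * (\<rho>V * q e)" by (rule mult_left_mono[OF ineq1]) simp
      finally show ?thesis by (simp add: mult_left_mono)
    qed
    finally have "sqrt (q ((-\<alpha>) *\<^sub>R d)) \<le> sqrt (\<alpha>\<^sup>2 * (L\<^sup>2 * (\<rho>V * q e)))" by (rule real_sqrt_le_mono)
    also have "\<dots> = \<alpha> * L * sqrt \<rho>V * sqrt (q e)"
      using \<alpha>_pos m_pos mL by (simp add: real_sqrt_mult)
    finally have s2: "sqrt (q ((-\<alpha>) *\<^sub>R d)) \<le> \<alpha> * L * sqrt \<rho>V * sqrt (q e)" .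
    have "sqrt (q (U *v e)) + sqrt (q ((-\<alpha>) *\<^sub>R d)) \<le> K * sqrt (q e)"
      using s1 s2 unfolding K_def by (simp add: algebra_simps)
    moreover have "0 \<le> sqrt (q (U *v e)) + sqrt (q ((-\<alpha>) *\<^sub>R d))"
      using Upsd[of "U *v e"] Upsd[of "(-\<alpha>) *\<^sub>R d"] unfolding q_def by simp
    ultimately have "(sqrt (q (U *v e)) + sqrt (q ((-\<alpha>) *\<^sub>R d)))\<^sup>2 \<le> (K * sqrt (q e))\<^sup>2"
      by (simp add: power_mono)
    also have "\<dots> = K\<^sup>2 * q e" using qe0 by (simp add: power_mult_distrib)
    finally have qa: "q a \<le> K\<^sup>2 * q e" using T by simp
    have "q b = \<alpha>\<^sup>2 * q (transpose A *v \<mu>)" unfolding q_def b_def by (subst quad_scale) simp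
    also have "\<dots> \<le> \<alpha>\<^sup>2 * (\<rho>A * (\<mu> \<bullet> \<mu>))" by (rule mult_left_mono[OF ineq5]) simp
    finally have qb: "q b \<le> \<alpha>\<^sup>2 * (\<rho>A * (norm \<mu>)\<^sup>2)" by (simp add: power2_norm_eq_inner)
    have pp: "0 \<le> p / (p - 1)" using p_gt by simp
    have st1: "q (y (Suc t) - xs) \<le> p * (K\<^sup>2 * q e) + p / (p - 1) * (\<alpha>\<^sup>2 * (\<rho>A * (norm \<mu>)\<^sup>2))"
    proof -
      have "p * q a \<le> p * (K\<^sup>2 * q e)" using qa p_gt by simp
      moreover have "p / (p - 1) * q b \<le> p / (p - 1) * (\<alpha>\<^sup>2 * (\<rho>A * (norm \<mu>)\<^sup>2))"
        by (rule mult_left_mono[OF qb pp])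
      ultimately show ?thesis unfolding E using Y by linarith
    qed
    have st2: "p / (p - 1) * (\<alpha>\<^sup>2 * (\<rho>A * (norm \<mu>)\<^sup>2)) + c = (1 + p * \<alpha> * \<beta> * \<rho>A / (p - 1)) * c"
      unfolding c_def using \<alpha>_pos \<beta>_pos p_gt by (simp add: field_simps power2_eq_square)
    have st3: "p * (K\<^sup>2 * q e) + (1 + p * \<alpha> * \<beta> * \<rho>A / (p - 1)) * c \<le> \<Gamma> * q e + \<Gamma> * c"
    proof (rule add_mono)
      show "p * (K\<^sup>2 * q e) \<le> \<Gamma> * q e"
        unfolding mult.assoc[symmetric] \<Gamma>_def using qe0 by (intro mult_right_mono) auto
      show "(1 + p * \<alpha> * \<beta> * \<rho>A / (p - 1)) * c \<le> \<Gamma> * c"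
        unfolding \<Gamma>_def using c0 by (intro mult_right_mono) auto
    qed
    have "q (y (Suc t) - xs) + c \<le> \<Gamma> * q e + \<Gamma> * c" using st1 st2 st3 by linarith
    thus ?thesis unfolding e_def by (simp add: algebra_simps)
  qed
  have main: "q (y t - xs) + c \<le> \<Gamma> ^ t * (q (y 0 - xs) + c)" for t
  proof (induction t)
    case 0 thus ?case by simp
  next
    case (Suc t)
    have "q (y (Suc t) - xs) + c \<le> \<Gamma> * (q (y t - xs) + c)" by (rule onestep)
    also have "\<dots> \<le> \<Gamma> * (\<Gamma> ^ t * (q (y 0 - xs) + c))" using Suc.IH G0 by (rule mult_left_mono)
    finally show ?case by (simp add: mult.assoc)
  qed
  show ?thesis
    using main[of "T - 1"]
    unfolding Let_def q_def y_def c_def \<mu>_def \<Gamma>_def K_def \<rho>U_def \<rho>V_def \<rho>A_def V_def U_def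
    by (simp add: qnorm_def)
qed

end
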